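(* Let $n\in\mathbb{N}=\{1,2,\dots\}$ and $0\le i\le n-1$. Then $$\int\frac{t^i}{i!}h_n(t)\,dt=-\frac{1}{n!}\sum_{k=0}^i\frac{(n-1-k)!}{2^{k+1}(i-k)!}\,t^{i-k}\,h_{n-1-k}(t),$$ i.e. the right-hand side is an antiderivative on $\mathbb{R}$ of $t\mapsto\frac{t^i}{i!}h_n(t)$.
   Context: $H_n$ denotes the $n$-th Hermite polynomial ($H_n(t)=(-1)^ne^{t^2}\frac{d^n}{dt^n}e^{-t^2}$), and the Hermite functions are $h_n(t)=\frac{1}{2^nn!\sqrt{\pi}}e^{-t^2}H_n(t)$, $t\in\mathbb{R}$. *)

theory Defs
  imports "HOL-Analysis.Analysis"
begin

definition hermite_H :: "nat \<Rightarrow> real \<Rightarrow> real" where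
  "hermite_H n t = (-1) ^ n * exp (t\<^sup>2) * ((deriv ^^ n) (\<lambda>x. exp (- (x\<^sup>2))) t)"

definition hermite_h :: "nat \<Rightarrow> real \<Rightarrow> real" where
  "hermite_h n t = exp (- (t\<^sup>2)) * hermite_H n t / (2 ^ n * fact n * sqrt pi)"

end

theory Submission
  imports Defs "HOL-Computational_Algebra.Polynomial"
begin

lemma gauss_poly: "\<exists>p. \<forall>x. (deriv ^^ m) (\<lambda>x. exp (- ((x::real)\<^sup>2))) x = poly p x * exp (- ((x::real)\<^sup>2))"
proof (induction m)
  case 0
  show ?case by (rule exI[of _ 1]) simp
next
  case (Suc m)
  then obtain p where p0: "\<forall>x. (deriv ^^ m) (\<lambda>x. exp (- ((x::real)\<^sup>2))) x = poly p x * exp (- ((x::real)\<^sup>2))" by blast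
  note p = p0[rule_format]
  have eq: "(deriv ^^ m) (\<lambda>x. exp (- ((x::real)\<^sup>2))) = (\<lambda>x. poly p x * exp (- ((x::real)\<^sup>2)))" using p by auto
  have d: "((\<lambda>x. poly p x * exp (- ((x::real)\<^sup>2))) has_real_derivative
      poly (pderiv p + p * [:0, -2:]) x * exp (- ((x::real)\<^sup>2))) (at x)" for x
    by (auto intro!: derivative_eq_intros simp: algebra_simps power2_eq_square)
  show ?case
    by (rule exI[of _ "pderiv p + p * [:0, -2:]"]) (simp add: eq DERIV_imp_deriv[OF d])
qed

lemma gauss_deriv: "((deriv ^^ m) (\<lambda>x. exp (- ((x::real)\<^sup>2))) has_real_derivative
   (deriv ^^ Suc m) (\<lambda>x. exp (- ((x::real)\<^sup>2))) t) (at t)"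
proof -
  obtain p where p0: "\<forall>x. (deriv ^^ m) (\<lambda>x. exp (- ((x::real)\<^sup>2))) x = poly p x * exp (- ((x::real)\<^sup>2))"
    using gauss_poly by blast
  note p = p0[rule_format]
  have eq: "(deriv ^^ m) (\<lambda>x. exp (- ((x::real)\<^sup>2))) = (\<lambda>x. poly p x * exp (- ((x::real)\<^sup>2)))" using p by auto
  have d: "((\<lambda>x. poly p x * exp (- ((x::real)\<^sup>2))) has_real_derivative
      poly (pderiv p + p * [:0, -2:]) x * exp (- (x\<^sup>2))) (at x)" for x
    by (auto intro!: derivative_eq_intros simp: algebra_simps power2_eq_square)
  show ?thesis unfolding funpow.simps o_def eq using DERIV_imp_deriv[OF d] d by simp
qed

lemma h_alt: "hermite_h m t = (-1)^m * (deriv ^^ m) (\<lambda>x. exp (- ((x::real)\<^sup>2))) t / (2 ^ m * fact m * sqrt pi)"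
proof -
  have "exp (- (t\<^sup>2)) * exp (t\<^sup>2) = 1" by (simp add: exp_minus field_simps)
  then show ?thesis unfolding hermite_h_def hermite_H_def
    by (metis (no_types, lifting) mult.assoc mult.left_commute mult_1)
qed

lemma aux0: "c \<noteq> 0 \<Longrightarrow> a \<noteq> 0 \<Longrightarrow> (x::real) / a = - c * (- x / (c * a))"
  by (simp add: field_simps)

lemma aux: "a \<noteq> 0 \<Longrightarrow> (s::real) * D / a = - 2 * (real m + 1) * (- s * D / (2 * (real m + 1) * a))"
  using aux0[of "2 * (real m + 1)" a "s * D"] by (simp add: mult.assoc)

lemma h_deriv: "(hermite_h m has_real_derivative (- 2 * (real m + 1) * hermite_h (Suc m) t)) (at t)"
proof -
  have e: "hermite_h m = (\<lambda>t. (-1)^m * (deriv ^^ m) (\<lambda>x. exp (- ((x::real)\<^sup>2))) t / (2 ^ m * fact m * sqrt pi))"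
    using h_alt by auto
  have "(hermite_h m has_real_derivative (-1)^m * (deriv ^^ Suc m) (\<lambda>x. exp (- ((x::real)\<^sup>2))) t / (2 ^ m * fact m * sqrt pi)) (at t)"
    unfolding e by (auto intro!: derivative_eq_intros gauss_deriv)
  moreover have "(-1)^m * (deriv ^^ Suc m) (\<lambda>x. exp (- ((x::real)\<^sup>2))) t / (2 ^ m * fact m * sqrt pi)
     = - 2 * (real m + 1) * hermite_h (Suc m) t"
  proof -
    have "2 ^ Suc m * fact (Suc m) * sqrt pi = 2 * (real m + 1) * (2 ^ m * fact m * sqrt pi)"
      by (simp add: fact_Suc algebra_simps)
    moreover have "2 ^ m * fact m * sqrt pi \<noteq> (0::real)" by simp
    moreover have "(-1::real)^Suc m = - ((-1)^m)" by simp
    ultimately show ?thesis unfolding h_alt[of "Suc m"]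
      by (simp only:) (rule aux)
  qed
  ultimately show ?thesis by simp
qed


lemma term_deriv:
  "((\<lambda>s. C * s ^ j * hermite_h m s) has_real_derivative
     C * (real j * t ^ (j - 1) * hermite_h m t) - C * 2 * (real m + 1) * t ^ j * hermite_h (Suc m) t) (at t)"
proof -
  have "((\<lambda>s. C * s ^ j * hermite_h m s) has_real_derivative
     C * (real j * t ^ (j - 1)) * hermite_h m t + C * t ^ j * (- 2 * (real m + 1) * hermite_h (Suc m) t)) (at t)"
    by (rule DERIV_cong[OF DERIV_mult[OF DERIV_cmult[OF DERIV_pow] h_deriv]]) (simp add: algebra_simps)
  then show ?thesis by (rule DERIV_cong) (simp add: algebra_simps)
qed


theorem lemma3p2:
  fixes n i :: nat
  assumes "n \<ge> 1" and "i \<le> n - 1"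
  shows "\<forall>t::real.
    ((\<lambda>s. - (1 / fact n) * (\<Sum>k = 0..i.
        fact (n - 1 - k) / (2 ^ (k + 1) * fact (i - k)) * s ^ (i - k) * hermite_h (n - 1 - k) s))
     has_real_derivative (t ^ i / fact i * hermite_h n t)) (at t)"
proof
  fix t :: real
  define A where "A k = (if k \<le> i then fact (n - k) / (2 ^ k * fact (i - k)) * t ^ (i - k) * hermite_h (n - k) t else 0)" for k
  have td: "((\<lambda>s. fact (n - 1 - k) / (2 ^ (k + 1) * fact (i - k)) * s ^ (i - k) * hermite_h (n - 1 - k) s)
      has_real_derivative A (Suc k) - A k) (at t)" if k: "k \<in> {0..i}" for k
  proof -
    define m where "m = n - 1 - k"
    define j where "j = i - k"
    define C :: real where "C = fact m / (2 ^ (k + 1) * fact j)"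
    have ki: "k \<le> i" using k by simp
    have nk: "n - k = Suc m" using assms ki unfolding m_def by simp
    have d: "((\<lambda>s. C * s ^ j * hermite_h m s) has_real_derivative
     C * (real j * t ^ (j - 1) * hermite_h m t) - C * 2 * (real m + 1) * t ^ j * hermite_h (Suc m) t) (at t)"
      by (rule term_deriv)
    have a1: "C * 2 * (real m + 1) * t ^ j * hermite_h (Suc m) t = A k"
    proof -
      have "C * 2 * (real m + 1) = fact (Suc m) / (2 ^ k * fact j)"
        unfolding C_def by (simp add: field_simps)
      then show ?thesis unfolding A_def using ki nk j_def by simp
    qed
    have a2: "C * (real j * t ^ (j - 1) * hermite_h m t) = A (Suc k)"
    proof (cases j)
      case 0
      then have "\<not> Suc k \<le> i" using ki j_def by simp
      then show ?thesis unfolding A_def using 0 by simp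
    next
      case (Suc j')
      have sk: "Suc k \<le> i" "i - Suc k = j'" "n - Suc k = m" using Suc j_def m_def nk by auto
      have fj: "fact j = real j * fact j'" using Suc by simp
      have jn: "real j \<noteq> 0" using Suc by simp
      have "C * real j = (real j * fact m) / (real j * (2 ^ Suc k * fact j'))"
        unfolding C_def fj by (simp add: algebra_simps)
      also have "\<dots> = fact m / (2 ^ Suc k * fact j')"
        by (rule nonzero_mult_divide_mult_cancel_left[OF jn])
      finally have cj: "C * real j = fact m / (2 ^ Suc k * fact j')" .
      have "C * (real j * t ^ (j - 1) * hermite_h m t) = (C * real j) * t ^ j' * hermite_h m t"
        using Suc by (simp add: algebra_simps)
      also have "\<dots> = A (Suc k)" unfolding cj A_def using sk by simp
      finally show ?thesis .
    qed
    have "((\<lambda>s. C * s ^ j * hermite_h m s) has_real_derivative A (Suc k) - A k) (at t)"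
      using d by (simp only: a1 a2)
    then show ?thesis by (simp only: C_def m_def j_def)
  qed
  have "((\<lambda>s. \<Sum>k = 0..i. fact (n - 1 - k) / (2 ^ (k + 1) * fact (i - k)) * s ^ (i - k) * hermite_h (n - 1 - k) s)
      has_real_derivative (\<Sum>k = 0..i. A (Suc k) - A k)) (at t)"
    by (rule DERIV_sum) (use td in auto)
  moreover have "(\<Sum>k = 0..i. A (Suc k) - A k) = A (Suc i) - A 0"
    by (rule sum_Suc_diff) simp
  moreover have "A (Suc i) = 0" unfolding A_def by simp
  moreover have "A 0 = fact n / fact i * t ^ i * hermite_h n t" unfolding A_def by simp
  ultimately have "((\<lambda>s. \<Sum>k = 0..i. fact (n - 1 - k) / (2 ^ (k + 1) * fact (i - k)) * s ^ (i - k) * hermite_h (n - 1 - k) s)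
      has_real_derivative - (fact n / fact i * t ^ i * hermite_h n t)) (at t)" by simp
  then have "((\<lambda>s. - (1 / fact n) * (\<Sum>k = 0..i. fact (n - 1 - k) / (2 ^ (k + 1) * fact (i - k)) * s ^ (i - k) * hermite_h (n - 1 - k) s))
      has_real_derivative - (1 / fact n) * - (fact n / fact i * t ^ i * hermite_h n t)) (at t)"
    by (rule DERIV_cmult)
  then show "((\<lambda>s. - (1 / fact n) * (\<Sum>k = 0..i. fact (n - 1 - k) / (2 ^ (k + 1) * fact (i - k)) * s ^ (i - k) * hermite_h (n - 1 - k) s))
      has_real_derivative (t ^ i / fact i * hermite_h n t)) (at t)"
    by simp
qed

end
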